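(* Let $x_1^*,\dots,x_n^*$ satisfy $0\le x_i^*\le q_i$ for each $i$ and $x_1^*\le x_2^*\le\cdots\le x_n^*$. Then there exists a function $f$ such that $(f,x_1^*,\dots,x_n^* )$ is a feasible solution of the reward-design problem if and only if \[C\left(\frac{x_n^*}{q_n}+\sum_{i=1}^{n-1}\left((n-i)\left(\frac{1}{q_i}-\frac{1}{q_{i+1}}\right)+\frac{1}{q_i}\right)x_i^*\right)\le B.\] Moreover, if this inequality holds, then $(f,x_1^*,\dots,x_n^* )$ is feasible for the step function $f$ defined by $f(x)=0$ for $0\le x<x_1^*$, and for $x_j^*\le x<x_{j+1}^*$ ($1\le j\le n$, with $x_{n+1}^*=+\infty$) \[f(x)=C\left(\sum_{t=1}^{j-1}\left(\frac{x_t^*}{q_t}-\frac{x_t^*}{q_{t+1}}\right)+\frac{x_j^*}{q_j}\right).\]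
   Context: There are $n$ agents with types $0<q_1\le q_2\le\cdots\le q_n$, a cost constant $C>0$ and a budget $B>0$. A reward function is a map $f:[0,\infty)\to[0,\infty)$; agent $i$'s utility for producing quality $x$ is $u_i(x)=f(x)-xC/q_i$. A tuple $(f,x_1^*,\dots,x_n^* )$ is a feasible solution of the reward-design problem if for each $i$: $0\le x_i^*\le q_i$ and $u_i(x_i^* )\ge u_i(x)$ for all $x\in[0,q_i]$, and moreover $\sum_{i=1}^n f(x_i^* )\le B$. *)

theory Defs
  imports "HOL-Analysis.Analysis"
begin

text \<open>A reward function is a map [0,oo) -> [0,oo), modelled as f :: real => real
  whose values on [0,oo) are nonnegative (values on negative reals are irrelevant).\<close>

definition reward_fun :: "(real \<Rightarrow> real) \<Rightarrow> bool" where
  "reward_fun f \<longleftrightarrow> (\<forall>y\<ge>0. f y \<ge> 0)"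

definition utility :: "real \<Rightarrow> (real \<Rightarrow> real) \<Rightarrow> real \<Rightarrow> real \<Rightarrow> real" where
  "utility C f qi y = f y - y * C / qi"

definition feasible ::
  "nat \<Rightarrow> (nat \<Rightarrow> real) \<Rightarrow> real \<Rightarrow> real \<Rightarrow> (real \<Rightarrow> real) \<Rightarrow> (nat \<Rightarrow> real) \<Rightarrow> bool" where
  "feasible n q C B f xs \<longleftrightarrow>
     reward_fun f \<and>
     (\<forall>i\<in>{1..n}. 0 \<le> xs i \<and> xs i \<le> q i \<and>
        (\<forall>y\<in>{0..q i}. utility C f (q i) (xs i) \<ge> utility C f (q i) y)) \<and>
     (\<Sum>i=1..n. f (xs i)) \<le> B"

text \<open>The step function of the lemma: 0 below x_1; on [x_j, x_{j+1}) (x_{n+1} = +oo)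
  it takes the value C(sum_{t<j}(x_t/q_t - x_t/q_{t+1}) + x_j/q_j). For y \<ge> x_1 the
  relevant j is the largest index with x_j \<le> y (intervals for tied x_j are empty).\<close>

definition step_value :: "(nat \<Rightarrow> real) \<Rightarrow> real \<Rightarrow> (nat \<Rightarrow> real) \<Rightarrow> nat \<Rightarrow> real" where
  "step_value q C xs j = C * ((\<Sum>t=1..<j. xs t / q t - xs t / q (t+1)) + xs j / q j)"

definition step_fun :: "nat \<Rightarrow> (nat \<Rightarrow> real) \<Rightarrow> real \<Rightarrow> (nat \<Rightarrow> real) \<Rightarrow> real \<Rightarrow> real" where
  "step_fun n q C xs y =
     (if y < xs 1 then 0
      else step_value q C xs (GREATEST j. j \<in> {1..n} \<and> xs j \<le> y))"

end

theory Submission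
  imports Defs
begin

lemma sv_suc:
  assumes "j \<ge> 1"
  shows "step_value q C xs (Suc j) = step_value q C xs j + C * (xs (Suc j) - xs j) / q (Suc j)"
proof -
  have "{1..<Suc j} = insert j {1..<j}" using assms by auto
  then have "(\<Sum>t=1..<Suc j. xs t / q t - xs t / q (t+1)) = (\<Sum>t=1..<j. xs t / q t - xs t / q (t+1)) + (xs j / q j - xs j / q (j+1))"
    by simp
  then show ?thesis using assms unfolding step_value_def Suc_eq_plus1
    by (simp add: algebra_simps add_divide_distrib diff_divide_distrib)
qed

lemma sv_one: "step_value q C xs 1 = C * xs 1 / q 1"
  unfolding step_value_def by simp

lemma sum_id:
  assumes "n \<ge> 1"
  shows "(\<Sum>i=1..n. step_value q C xs i) =
     C * (xs n / q n + (\<Sum>i=1..<n. (real (n - i) * (1 / q i - 1 / q (i+1)) + 1 / q i) * xs i))"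
  using assms
proof (induction n rule: nat_induct_at_least)
  case base
  then show ?case by (simp add: step_value_def)
next
  case (Suc n)
  have A: "(\<Sum>i=1..<Suc n. (real (Suc n - i) * (1 / q i - 1 / q (i+1)) + 1 / q i) * xs i)
     = (\<Sum>i=1..<Suc n. (real (n - i) * (1 / q i - 1 / q (i+1)) + 1 / q i) * xs i)
       + (\<Sum>i=1..<Suc n. (1 / q i - 1 / q (i+1)) * xs i)"
    unfolding sum.distrib[symmetric]
  proof (rule sum.cong)
    fix i assume "i \<in> {1..<Suc n}"
    then have RR: "real (Suc n - i) = real (n - i) + 1" by (simp add: Suc_diff_le)
    show "(real (Suc n - i) * (1 / q i - 1 / q (i+1)) + 1 / q i) * xs i =
       (real (n - i) * (1 / q i - 1 / q (i+1)) + 1 / q i) * xs i + (1 / q i - 1 / q (i+1)) * xs i"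
      unfolding RR by (simp add: algebra_simps del: of_nat_diff)
  qed simp
  have B: "(\<Sum>i=1..<Suc n. (real (n - i) * (1 / q i - 1 / q (i+1)) + 1 / q i) * xs i)
      = (\<Sum>i=1..<n. (real (n - i) * (1 / q i - 1 / q (i+1)) + 1 / q i) * xs i) + xs n / q n"
    using Suc.hyps by simp
  have D: "step_value q C xs (Suc n) = C * ((\<Sum>i=1..<Suc n. (1 / q i - 1 / q (i+1)) * xs i) + xs (Suc n) / q (Suc n))"
    unfolding step_value_def by (simp add: algebra_simps)
  have E: "(\<Sum>i=1..Suc n. step_value q C xs i) = (\<Sum>i=1..n. step_value q C xs i) + step_value q C xs (Suc n)"
    using Suc.hyps by simp
  have gen: "\<And>P Q a b::real. C*(a+P) + C*(Q+b) = C*(b + ((P+a)+Q))" by (simp add: algebra_simps)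
  show ?case unfolding E Suc.IH A B D by (rule gen)
qed

lemma chain_mono:
  fixes g :: "nat \<Rightarrow> real"
  assumes m: "\<And>i. i \<in> {1..<n} \<Longrightarrow> g i \<le> g (i+1)"
    and "1 \<le> i" "i \<le> k" "k \<le> n"
  shows "g i \<le> g k"
  using assms(3,4)
proof (induction k rule: dec_induct)
  case base then show ?case by simp
next
  case (step k)
  have "g k \<le> g (k+1)" using m[of k] step assms(2) by auto
  then show ?case using step by simp
qed

lemma sv_bounds:
  assumes qpos: "\<And>i. i \<in> {1..n} \<Longrightarrow> 0 < q i"
    and qmono: "\<And>i. i \<in> {1..<n} \<Longrightarrow> q i \<le> q (i+1)"
    and Cpos: "C > 0"
    and xmono: "\<And>i. i \<in> {1..<n} \<Longrightarrow> xs i \<le> xs (i+1)"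
    and ij: "1 \<le> i" "i \<le> j" "j \<le> n"
  shows "step_value q C xs j - step_value q C xs i \<le> C * (xs j - xs i) / q i
       \<and> C * (xs j - xs i) / q j \<le> step_value q C xs j - step_value q C xs i"
  using ij(2,3)
proof (induction j rule: dec_induct)
  case base then show ?case by simp
next
  case (step j)
  let ?S = "step_value q C xs"
  have j1: "j \<ge> 1" using step ij by auto
  have suc: "?S (Suc j) = ?S j + C * (xs (Suc j) - xs j) / q (Suc j)" using sv_suc[OF j1] .
  have IH: "?S j - ?S i \<le> C * (xs j - xs i) / q i" "C * (xs j - xs i) / q j \<le> ?S j - ?S i"
    using step by auto
  have qi: "0 < q i" using qpos ij step by auto
  have qj: "0 < q j" using qpos ij step by auto
  have qiS: "q i \<le> q (Suc j)" using chain_mono[of n q i "Suc j", OF qmono] ij step by auto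
  have qjS: "q j \<le> q (Suc j)" using qmono[of j] j1 step by auto
  have xd: "0 \<le> xs (Suc j) - xs j" using xmono[of j] j1 step by auto
  have xi: "0 \<le> xs j - xs i" using chain_mono[of n xs i j, OF xmono] ij step by auto
  have a1: "C * (xs (Suc j) - xs j) / q (Suc j) \<le> C * (xs (Suc j) - xs j) / q i"
    by (rule divide_left_mono) (use xd Cpos qi qiS in auto)
  have a2: "C * (xs j - xs i) / q (Suc j) \<le> C * (xs j - xs i) / q j"
    by (rule divide_left_mono) (use xi Cpos qj qjS in auto)
  have e1: "C * (xs (Suc j) - xs i) / q i = C * (xs j - xs i) / q i + C * (xs (Suc j) - xs j) / q i"
    by (simp add: algebra_simps add_divide_distrib diff_divide_distrib)
  have e2: "C * (xs (Suc j) - xs i) / q (Suc j) = C * (xs j - xs i) / q (Suc j) + C * (xs (Suc j) - xs j) / q (Suc j)"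
    by (simp add: algebra_simps add_divide_distrib diff_divide_distrib)
  show ?case unfolding suc e1 e2 using IH a1 a2 by linarith
qed

theorem lemma2:
  fixes n :: nat and q xs :: "nat \<Rightarrow> real" and C B :: real
  assumes n1: "n \<ge> 1"
    and qpos: "\<And>i. i \<in> {1..n} \<Longrightarrow> 0 < q i"
    and qmono: "\<And>i. i \<in> {1..<n} \<Longrightarrow> q i \<le> q (i+1)"
    and Cpos: "C > 0" and Bpos: "B > 0"
    and xbd: "\<And>i. i \<in> {1..n} \<Longrightarrow> 0 \<le> xs i \<and> xs i \<le> q i"
    and xmono: "\<And>i. i \<in> {1..<n} \<Longrightarrow> xs i \<le> xs (i+1)"
  shows "((\<exists>f. feasible n q C B f xs) \<longleftrightarrow>
           C * (xs n / q n + (\<Sum>i=1..<n. (real (n - i) * (1 / q i - 1 / q (i+1)) + 1 / q i) * xs i)) \<le> B)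
       \<and> (C * (xs n / q n + (\<Sum>i=1..<n. (real (n - i) * (1 / q i - 1 / q (i+1)) + 1 / q i) * xs i)) \<le> B
            \<longrightarrow> feasible n q C B (step_fun n q C xs) xs)"
proof -
  let ?S = "step_value q C xs"
  let ?T = "C * (xs n / q n + (\<Sum>i=1..<n. (real (n - i) * (1 / q i - 1 / q (i+1)) + 1 / q i) * xs i))"
  let ?f = "step_fun n q C xs"
  have sumid: "(\<Sum>i=1..n. ?S i) = ?T" using sum_id[OF n1] .
  have bnd: "?S j - ?S i \<le> C * (xs j - xs i) / q i \<and> C * (xs j - xs i) / q j \<le> ?S j - ?S i"
    if "1 \<le> i" "i \<le> j" "j \<le> n" for i j
    using sv_bounds[of n q C xs i j, OF qpos qmono Cpos xmono that] by blast
  have xch: "xs i \<le> xs j" if "1 \<le> i" "i \<le> j" "j \<le> n" for i j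
    using chain_mono[of n xs i j, OF xmono that] by blast
  have qch: "q i \<le> q j" if "1 \<le> i" "i \<le> j" "j \<le> n" for i j
    using chain_mono[of n q i j, OF qmono that] by blast
  have S1: "?S 1 = C * xs 1 / q 1" by (rule sv_one)
  have Slow: "C * xs i / q i \<le> ?S i" if "1 \<le> i" "i \<le> n" for i
  proof -
    have b: "C * (xs i - xs 1) / q i \<le> ?S i - ?S 1" using bnd[of 1 i] that by auto
    have qi: "0 < q i" "0 < q 1" using qpos that by auto
    have x1: "0 \<le> xs 1" using xbd[of 1] n1 by auto
    have "C * xs 1 / q i \<le> C * xs 1 / q 1"
      by (rule divide_left_mono) (use qi qch[of 1 i] that x1 Cpos in auto)
    moreover have "C * (xs i - xs 1) / q i = C * xs i / q i - C * xs 1 / q i"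
      by (simp add: algebra_simps diff_divide_distrib)
    ultimately show ?thesis using b S1 by linarith
  qed
  have nec: "?S i \<le> f (xs i)" if F: "feasible n q C B f xs" and "1 \<le> i" "i \<le> n" for f i
    using that(2,3)
  proof (induction i rule: dec_induct)
    case base
    have r: "f 0 \<ge> 0" using F unfolding feasible_def reward_fun_def by auto
    have "utility C f (q 1) (xs 1) \<ge> utility C f (q 1) 0"
    proof -
      have "1 \<in> {1..n}" using n1 by auto
      moreover have "(0::real) \<in> {0..q 1}" using xbd[of 1] n1 by auto
      ultimately show ?thesis using F unfolding feasible_def by blast
    qed
    then have "f (xs 1) - xs 1 * C / q 1 \<ge> f 0" unfolding utility_def by simp
    then show ?case using r S1 by (simp add: mult.commute)
  next
    case (step i)
    have i1: "1 \<le> i" using n1 step by auto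
    have "xs i \<le> xs (Suc i)" using xmono[of i] i1 step by auto
    moreover have "0 \<le> xs i" using xbd[of i] i1 step by auto
    moreover have "xs (Suc i) \<le> q (Suc i)" using xbd[of "Suc i"] step by auto
    ultimately have "xs i \<in> {0..q (Suc i)}" by auto
    then have "utility C f (q (Suc i)) (xs (Suc i)) \<ge> utility C f (q (Suc i)) (xs i)"
      using F step unfolding feasible_def by auto
    then have u: "f (xs (Suc i)) - xs (Suc i) * C / q (Suc i) \<ge> f (xs i) - xs i * C / q (Suc i)"
      unfolding utility_def by simp
    have e: "C * (xs (Suc i) - xs i) / q (Suc i) = xs (Suc i) * C / q (Suc i) - xs i * C / q (Suc i)"
      by (simp add: algebra_simps diff_divide_distrib)
    have IH: "?S i \<le> f (xs i)" using step.IH step.prems by simp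
    show ?case using sv_suc[OF i1, of q C xs] IH u e by linarith
  qed
  have G: "(GREATEST j. j \<in> {1..n} \<and> xs j \<le> y) \<in> {1..n} \<and> xs (GREATEST j. j \<in> {1..n} \<and> xs j \<le> y) \<le> y
      \<and> k \<le> (GREATEST j. j \<in> {1..n} \<and> xs j \<le> y)"
    if "k \<in> {1..n}" "xs k \<le> y" for y k
  proof -
    have P: "k \<in> {1..n} \<and> xs k \<le> y" using that by auto
    have m: "\<And>j. j \<in> {1..n} \<and> xs j \<le> y \<Longrightarrow> j \<le> n" by auto
    show ?thesis using GreatestI_nat[of "\<lambda>j. j \<in> {1..n} \<and> xs j \<le> y", OF P m]
        Greatest_le_nat[of "\<lambda>j. j \<in> {1..n} \<and> xs j \<le> y", OF P m] by blast
  qed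
  have fx: "?f (xs i) = ?S i" if "1 \<le> i" "i \<le> n" for i
  proof -
    have nl: "\<not> xs i < xs 1" using xch[of 1 i] that by auto
    define g where "g = (GREATEST j. j \<in> {1..n} \<and> xs j \<le> xs i)"
    have g: "g \<in> {1..n}" "xs g \<le> xs i" "i \<le> g" using G[of i "xs i"] that unfolding g_def by auto
    have "xs i \<le> xs g" using xch[of i g] g that by auto
    then have "xs g = xs i" using g by auto
    then have "?S g = ?S i" using bnd[of i g] g that by auto
    then show ?thesis unfolding step_fun_def g_def[symmetric] using nl by simp
  qed
  have reward: "reward_fun ?f"
    unfolding reward_fun_def
  proof (intro allI impI)
    fix y :: real assume y: "0 \<le> y"
    show "0 \<le> ?f y"
    proof (cases "y < xs 1")
      case True then show ?thesis unfolding step_fun_def by simp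
    next
      case False
      define g where "g = (GREATEST j. j \<in> {1..n} \<and> xs j \<le> y)"
      have g: "g \<in> {1..n}" using G[of 1 y] False n1 unfolding g_def by auto
      have "0 \<le> C * xs g / q g" using Cpos xbd[of g] qpos[of g] g by auto
      then have "0 \<le> ?S g" using Slow[of g] g by auto
      then show ?thesis unfolding step_fun_def g_def[symmetric] using False by simp
    qed
  qed
  have IC: "utility C ?f (q i) y \<le> utility C ?f (q i) (xs i)"
    if "i \<in> {1..n}" "y \<in> {0..q i}" for i y
  proof -
    have i: "1 \<le> i" "i \<le> n" using that by auto
    have qi: "0 < q i" using qpos that by auto
    have key: "?f y - ?S i \<le> C * (y - xs i) / q i"
    proof (cases "y < xs 1")
      case True
      have "C * (y - xs i) / q i = C * y / q i - C * xs i / q i"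
        by (simp add: algebra_simps diff_divide_distrib)
      moreover have "0 \<le> C * y / q i" using Cpos qi that by auto
      ultimately show ?thesis unfolding step_fun_def using True Slow[OF i] by simp
    next
      case False
      define g where "g = (GREATEST j. j \<in> {1..n} \<and> xs j \<le> y)"
      have g: "g \<in> {1..n}" "xs g \<le> y" using G[of 1 y] False n1 unfolding g_def by auto
      have fy: "?f y = ?S g" unfolding step_fun_def g_def[symmetric] using False by simp
      show ?thesis
      proof (cases "i \<le> g")
        case True
        have "?S g - ?S i \<le> C * (xs g - xs i) / q i" using bnd[of i g] True g i by auto
        moreover have "C * (xs g - xs i) / q i \<le> C * (y - xs i) / q i"
          using g qi Cpos by (simp add: divide_right_mono)
        ultimately show ?thesis using fy by linarith
      next
        case False
        have "C * (xs i - xs g) / q i \<le> ?S i - ?S g" using bnd[of g i] False g i by auto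
        moreover have "C * (xs i - y) / q i \<le> C * (xs i - xs g) / q i"
          using g qi Cpos by (simp add: divide_right_mono)
        moreover have "C * (y - xs i) / q i = - (C * (xs i - y) / q i)"
          by (simp add: algebra_simps diff_divide_distrib)
        ultimately show ?thesis using fy by linarith
      qed
    qed
    have e: "C * (y - xs i) / q i = y * C / q i - xs i * C / q i"
      by (simp add: algebra_simps diff_divide_distrib)
    show ?thesis unfolding utility_def using key e fx[OF i] by linarith
  qed
  have suff: "feasible n q C B ?f xs" if TB: "?T \<le> B"
  proof -
    have "(\<Sum>i=1..n. ?f (xs i)) = (\<Sum>i=1..n. ?S i)" by (rule sum.cong) (auto simp: fx)
    then have "(\<Sum>i=1..n. ?f (xs i)) \<le> B" using sumid TB by simp
    then show ?thesis unfolding feasible_def using reward IC xbd by auto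
  qed
  have necT: "?T \<le> B" if "feasible n q C B f xs" for f
  proof -
    have "(\<Sum>i=1..n. ?S i) \<le> (\<Sum>i=1..n. f (xs i))" by (rule sum_mono) (use nec[OF that] in auto)
    moreover have "(\<Sum>i=1..n. f (xs i)) \<le> B" using that unfolding feasible_def by auto
    ultimately show ?thesis using sumid by simp
  qed
  show ?thesis using suff necT by blast
qed

end
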